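(* Two finite irreducible undirected graphs (loops allowed) have isomorphic associated lattices (as self-dual lattices) if and only if their radicals are isomorphic graphs.
   Context: For a graph $\nabla$ with vertex set $V$: $\nabla(x)$ is the set of vertices adjacent to $x$, $\nabla(X)=\bigcap_{x\in X}\nabla(x)$ (with $\nabla(\emptyset)=V$), and the associated lattice $\mathbb{L}(\nabla)=\{X\subseteq V:\nabla(\nabla(X))=X\}$, ordered by inclusion, is a self-dual lattice with duality map $X\mapsto\nabla(X)$; isomorphisms of self-dual lattices are order isomorphisms commuting with the duality maps. A graph is irreducible if distinct vertices have distinct neighborhoods. An element $a$ of a lattice is (completely) meet-irreducible if $a=\bigwedge A$ for a subset $A$ implies $a\in A$; a vertex $x$ is essential if $\nabla(x)$ is meet-irreducible in $\mathbb{L}(\nabla)$. The radical $\sqrt{\nabla}$ is the induced subgraph on the essential vertices. *)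

theory Defs
  imports Main
begin

definition undirected :: "'a set \<Rightarrow> ('a \<Rightarrow> 'a \<Rightarrow> bool) \<Rightarrow> bool" where
  "undirected V E \<longleftrightarrow> (\<forall>x\<in>V. \<forall>y\<in>V. E x y \<longrightarrow> E y x)"

definition nbhd :: "'a set \<Rightarrow> ('a \<Rightarrow> 'a \<Rightarrow> bool) \<Rightarrow> 'a \<Rightarrow> 'a set" where
  "nbhd V E x = {y \<in> V. E x y}"

text \<open>Common neighbourhood of a set X (equals V for X empty).\<close>
definition nabla :: "'a set \<Rightarrow> ('a \<Rightarrow> 'a \<Rightarrow> bool) \<Rightarrow> 'a set \<Rightarrow> 'a set" where
  "nabla V E X = {y \<in> V. \<forall>x\<in>X. E x y}"

definition assoc_lattice :: "'a set \<Rightarrow> ('a \<Rightarrow> 'a \<Rightarrow> bool) \<Rightarrow> 'a set set" where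
  "assoc_lattice V E = {X. X \<subseteq> V \<and> nabla V E (nabla V E X) = X}"

definition irreducible_graph :: "'a set \<Rightarrow> ('a \<Rightarrow> 'a \<Rightarrow> bool) \<Rightarrow> bool" where
  "irreducible_graph V E \<longleftrightarrow> (\<forall>x\<in>V. \<forall>y\<in>V. nbhd V E x = nbhd V E y \<longrightarrow> x = y)"

definition is_meet :: "'a set set \<Rightarrow> 'a set set \<Rightarrow> 'a set \<Rightarrow> bool" where
  "is_meet L A a \<longleftrightarrow> a \<in> L \<and> (\<forall>b\<in>A. a \<subseteq> b) \<and> (\<forall>c\<in>L. (\<forall>b\<in>A. c \<subseteq> b) \<longrightarrow> c \<subseteq> a)"

text \<open>Completely meet-irreducible element of the lattice L.\<close>
definition meet_irreducible :: "'a set set \<Rightarrow> 'a set \<Rightarrow> bool" where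
  "meet_irreducible L a \<longleftrightarrow> a \<in> L \<and> (\<forall>A. A \<subseteq> L \<longrightarrow> is_meet L A a \<longrightarrow> a \<in> A)"

definition essential :: "'a set \<Rightarrow> ('a \<Rightarrow> 'a \<Rightarrow> bool) \<Rightarrow> 'a \<Rightarrow> bool" where
  "essential V E x \<longleftrightarrow> x \<in> V \<and> meet_irreducible (assoc_lattice V E) (nbhd V E x)"

text \<open>Vertex set of the radical; its edges are those of E restricted to this set.\<close>
definition radical_vertices :: "'a set \<Rightarrow> ('a \<Rightarrow> 'a \<Rightarrow> bool) \<Rightarrow> 'a set" where
  "radical_vertices V E = {x \<in> V. essential V E x}"

definition graph_iso :: "'a set \<Rightarrow> ('a \<Rightarrow> 'a \<Rightarrow> bool) \<Rightarrow> 'b set \<Rightarrow> ('b \<Rightarrow> 'b \<Rightarrow> bool)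
    \<Rightarrow> ('a \<Rightarrow> 'b) \<Rightarrow> bool" where
  "graph_iso V1 E1 V2 E2 g \<longleftrightarrow> bij_betw g V1 V2 \<and>
     (\<forall>x\<in>V1. \<forall>y\<in>V1. E1 x y \<longleftrightarrow> E2 (g x) (g y))"

definition sd_lattice_iso :: "'a set \<Rightarrow> ('a \<Rightarrow> 'a \<Rightarrow> bool) \<Rightarrow> 'b set \<Rightarrow> ('b \<Rightarrow> 'b \<Rightarrow> bool)
    \<Rightarrow> ('a set \<Rightarrow> 'b set) \<Rightarrow> bool" where
  "sd_lattice_iso V1 E1 V2 E2 f \<longleftrightarrow>
     bij_betw f (assoc_lattice V1 E1) (assoc_lattice V2 E2) \<and>
     (\<forall>X\<in>assoc_lattice V1 E1. \<forall>Y\<in>assoc_lattice V1 E1. X \<subseteq> Y \<longleftrightarrow> f X \<subseteq> f Y) \<and>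
     (\<forall>X\<in>assoc_lattice V1 E1. f (nabla V1 E1 X) = nabla V2 E2 (f X))"

end

theory Submission
  imports Defs
begin

lemma nabla_sub: "nabla V E X \<subseteq> V" by (auto simp: nabla_def)
lemma nabla_anti: "X \<subseteq> Y \<Longrightarrow> nabla V E Y \<subseteq> nabla V E X" by (auto simp: nabla_def)
lemma nabla_ext: "undirected V E \<Longrightarrow> X \<subseteq> V \<Longrightarrow> X \<subseteq> nabla V E (nabla V E X)"
  by (auto simp: nabla_def undirected_def)
lemma nabla3: "undirected V E \<Longrightarrow> X \<subseteq> V \<Longrightarrow> nabla V E (nabla V E (nabla V E X)) = nabla V E X"
proof (rule subset_antisym)
  assume u: "undirected V E" and X: "X \<subseteq> V"
  show "nabla V E (nabla V E (nabla V E X)) \<subseteq> nabla V E X"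
    by (rule nabla_anti[OF nabla_ext[OF u X]])
  show "nabla V E X \<subseteq> nabla V E (nabla V E (nabla V E X))"
    by (rule nabla_ext[OF u nabla_sub])
qed
lemma nabla_in: "undirected V E \<Longrightarrow> X \<subseteq> V \<Longrightarrow> nabla V E X \<in> assoc_lattice V E"
  unfolding assoc_lattice_def using nabla3[of V E X] nabla_sub[of V E X] by simp
lemma nbhd_eq: "nbhd V E x = nabla V E {x}" by (auto simp: nbhd_def nabla_def)
lemma latD: "Z \<in> assoc_lattice V E \<Longrightarrow> Z \<subseteq> V"
  "Z \<in> assoc_lattice V E \<Longrightarrow> nabla V E (nabla V E Z) = Z"
  by (auto simp: assoc_lattice_def)
lemma rad_sub: "radical_vertices V E \<subseteq> V" by (auto simp: radical_vertices_def)
lemma nbhd_in: "undirected V E \<Longrightarrow> x \<in> V \<Longrightarrow> nbhd V E x \<in> assoc_lattice V E"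
  by (simp add: nbhd_eq nabla_in)

lemma mi_nbhd:
  assumes u: "undirected V E" and mi: "meet_irreducible (assoc_lattice V E) M"
  shows "\<exists>y\<in>nabla V E M. M = nbhd V E y"
proof -
  let ?L = "assoc_lattice V E"
  have M: "M \<in> ?L" using mi by (simp add: meet_irreducible_def)
  hence MV: "M \<subseteq> V" and MM: "nabla V E (nabla V E M) = M" by (auto simp: assoc_lattice_def)
  let ?A = "nbhd V E ` nabla V E M"
  have AL: "?A \<subseteq> ?L"
  proof
    fix b assume "b \<in> ?A"
    then obtain y where "y \<in> nabla V E M" "b = nbhd V E y" by auto
    moreover have "y \<in> V" using \<open>y \<in> nabla V E M\<close> unfolding nabla_def by blast
    ultimately show "b \<in> ?L" using nbhd_in[OF u] by simp
  qed
  have "is_meet ?L ?A M"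
    unfolding is_meet_def
  proof (intro conjI ballI impI)
    show "M \<in> ?L" by fact
  next
    fix b assume "b \<in> ?A"
    then obtain y where y: "y \<in> nabla V E M" "b = nbhd V E y" by auto
    show "M \<subseteq> b"
    proof
      fix z assume z: "z \<in> M"
      have "E z y" "y \<in> V" using y(1) z unfolding nabla_def by blast+
      hence "E y z" using u MV z unfolding undirected_def by blast
      thus "z \<in> b" using y(2) MV z unfolding nbhd_def by blast
    qed
  next
    fix c assume c: "c \<in> ?L" "\<forall>b\<in>?A. c \<subseteq> b"
    show "c \<subseteq> M"
    proof
      fix z assume z: "z \<in> c"
      have zV: "z \<in> V" using c(1) z unfolding assoc_lattice_def by blast
      have "\<forall>y\<in>nabla V E M. E y z"
      proof
        fix y assume "y \<in> nabla V E M"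
        hence "c \<subseteq> nbhd V E y" using c(2) by blast
        thus "E y z" using z by (auto simp: nbhd_def)
      qed
      hence "z \<in> nabla V E (nabla V E M)" using zV by (simp add: nabla_def)
      thus "z \<in> M" using MM by simp
    qed
  qed
  then have "M \<in> ?A" using mi AL unfolding meet_irreducible_def by blast
  thus ?thesis by auto
qed

lemma K:
  assumes fin: "finite V" and u: "undirected V E" and Z: "Z \<in> assoc_lattice V E"
  shows "nabla V E (radical_vertices V E \<inter> nabla V E Z) = Z"
proof -
  have "\<forall>Z. Z \<in> assoc_lattice V E \<longrightarrow> card V - card Z = n \<longrightarrow>
          nabla V E (radical_vertices V E \<inter> nabla V E Z) = Z" for n
  proof (induction n rule: less_induct)
    case (less n)
    show ?case
    proof (intro allI impI)
      fix Z assume Z: "Z \<in> assoc_lattice V E" and n: "card V - card Z = n"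
      let ?R = "radical_vertices V E"
      let ?W = "nabla V E (?R \<inter> nabla V E Z)"
      have ZV: "Z \<subseteq> V" using Z by (auto simp: assoc_lattice_def)
      have ZW: "Z \<subseteq> ?W" using ZV u by (auto simp: nabla_def undirected_def)
      have WL: "?W \<in> assoc_lattice V E" by (rule nabla_in[OF u]) (auto simp: nabla_def)
      have "?W \<subseteq> Z"
      proof (cases "meet_irreducible (assoc_lattice V E) Z")
        case True
        then obtain y where y: "y \<in> nabla V E Z" "Z = nbhd V E y" using mi_nbhd[OF u] by blast
        have "y \<in> ?R" using True y by (auto simp: radical_vertices_def essential_def nabla_def)
        then show ?thesis using y by (auto simp: nabla_def nbhd_def)
      next
        case False
        then obtain A where A: "A \<subseteq> assoc_lattice V E" "is_meet (assoc_lattice V E) A Z" "Z \<notin> A"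
          using Z by (auto simp: meet_irreducible_def)
        have "\<forall>b\<in>A. ?W \<subseteq> b"
        proof
          fix b assume b: "b \<in> A"
          have bL: "b \<in> assoc_lattice V E" using A b by auto
          have Zb: "Z \<subseteq> b" using A b by (auto simp: is_meet_def)
          have "Z \<noteq> b" using A b by auto
          hence "Z \<subset> b" using Zb by auto
          moreover have "b \<subseteq> V" using bL by (auto simp: assoc_lattice_def)
          ultimately have "card Z < card b" "card b \<le> card V"
            using fin psubset_card_mono[of b Z] card_mono[of V b] finite_subset[of b V] by auto
          hence "card V - card b < n" using n by linarith
          hence IH: "nabla V E (?R \<inter> nabla V E b) = b" using less.IH bL by simp
          have "?R \<inter> nabla V E b \<subseteq> ?R \<inter> nabla V E Z" using nabla_anti[OF Zb] by auto
          hence "?W \<subseteq> nabla V E (?R \<inter> nabla V E b)" by (rule nabla_anti)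
          thus "?W \<subseteq> b" using IH by simp
        qed
        moreover have "\<forall>c\<in>assoc_lattice V E. (\<forall>b\<in>A. c \<subseteq> b) \<longrightarrow> c \<subseteq> Z"
          using A(2) unfolding is_meet_def by blast
        ultimately show ?thesis using WL by blast
      qed
      thus "?W = Z" using ZW by auto
    qed
  qed
  thus ?thesis using Z by blast
qed


lemma edge_char:
  assumes u: "undirected V E" and x: "x \<in> V" and x': "x' \<in> V"
  shows "E x x' \<longleftrightarrow> nabla V E (nbhd V E x') \<subseteq> nbhd V E x"
proof
  assume e: "E x x'"
  have ex: "E x' x" using u x x' e unfolding undirected_def by blast
  show "nabla V E (nbhd V E x') \<subseteq> nbhd V E x"
  proof
    fix z assume "z \<in> nabla V E (nbhd V E x')"
    hence "z \<in> V" "\<forall>w\<in>nbhd V E x'. E w z" unfolding nabla_def by blast+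
    moreover have "x \<in> nbhd V E x'" using ex x unfolding nbhd_def by blast
    ultimately show "z \<in> nbhd V E x" unfolding nbhd_def by blast
  qed
next
  assume s: "nabla V E (nbhd V E x') \<subseteq> nbhd V E x"
  have "\<forall>w\<in>nbhd V E x'. E w x'" using u x' unfolding nbhd_def undirected_def by blast
  hence "x' \<in> nabla V E (nbhd V E x')" using x' unfolding nabla_def by blast
  thus "E x x'" using s unfolding nbhd_def by blast
qed

lemma meet_transfer:
  assumes img: "f ` L1 = L2" and ord: "\<forall>X\<in>L1. \<forall>Y\<in>L1. X \<subseteq> Y \<longleftrightarrow> f X \<subseteq> f Y"
    and A: "A \<subseteq> L1" and a: "a \<in> L1"
  shows "is_meet L2 (f ` A) (f a) \<longleftrightarrow> is_meet L1 A a"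
proof -
  have o: "X \<subseteq> Y \<longleftrightarrow> f X \<subseteq> f Y" if "X \<in> L1" "Y \<in> L1" for X Y
    using ord that by blast
  have AL: "b \<in> L1" if "b \<in> A" for b using A that by blast
  show ?thesis
  proof
    assume m: "is_meet L2 (f ` A) (f a)"
    show "is_meet L1 A a" unfolding is_meet_def
    proof (intro conjI ballI impI)
      show "a \<in> L1" by fact
    next
      fix b assume b: "b \<in> A"
      have "f a \<subseteq> f b" using m b unfolding is_meet_def by blast
      thus "a \<subseteq> b" using o[OF a AL[OF b]] by simp
    next
      fix c assume c: "c \<in> L1" "\<forall>b\<in>A. c \<subseteq> b"
      have "\<forall>b\<in>f ` A. f c \<subseteq> b"
      proof
        fix b assume "b \<in> f ` A"
        then obtain b' where b': "b' \<in> A" "b = f b'" by auto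
        have "c \<subseteq> b'" using c(2) b'(1) by blast
        thus "f c \<subseteq> b" using o[OF c(1) AL[OF b'(1)]] b'(2) by simp
      qed
      moreover have "f c \<in> L2" using c img by blast
      ultimately have "f c \<subseteq> f a" using m unfolding is_meet_def by blast
      thus "c \<subseteq> a" using o[OF c(1) a] by simp
    qed
  next
    assume m: "is_meet L1 A a"
    show "is_meet L2 (f ` A) (f a)" unfolding is_meet_def
    proof (intro conjI ballI impI)
      show "f a \<in> L2" using a img by blast
    next
      fix b assume b: "b \<in> f ` A"
      then obtain b' where b': "b' \<in> A" "b = f b'" by auto
      have "a \<subseteq> b'" using m b'(1) unfolding is_meet_def by blast
      thus "f a \<subseteq> b" using o[OF a AL[OF b'(1)]] b'(2) by simp
    next
      fix c assume c: "c \<in> L2" "\<forall>b\<in>f ` A. c \<subseteq> b"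
      obtain c' where c': "c' \<in> L1" "c = f c'" using c img by auto
      have "\<forall>b\<in>A. c' \<subseteq> b"
      proof
        fix b assume b: "b \<in> A"
        have "f c' \<subseteq> f b" using c(2) c'(2) b by blast
        thus "c' \<subseteq> b" using o[OF c'(1) AL[OF b]] by simp
      qed
      hence "c' \<subseteq> a" using m c'(1) unfolding is_meet_def by blast
      thus "c \<subseteq> f a" using o[OF c'(1) a] c'(2) by simp
    qed
  qed
qed

lemma mi_transfer:
  assumes bij: "bij_betw f L1 L2" and ord: "\<forall>X\<in>L1. \<forall>Y\<in>L1. X \<subseteq> Y \<longleftrightarrow> f X \<subseteq> f Y"
    and a: "a \<in> L1"
  shows "meet_irreducible L2 (f a) \<longleftrightarrow> meet_irreducible L1 a"
proof -
  have img: "f ` L1 = L2" and inj: "inj_on f L1" using bij by (auto simp: bij_betw_def)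
  show ?thesis
  proof
    assume m: "meet_irreducible L2 (f a)"
    show "meet_irreducible L1 a" unfolding meet_irreducible_def
    proof (intro conjI allI impI)
      show "a \<in> L1" by fact
    next
      fix A assume A: "A \<subseteq> L1" "is_meet L1 A a"
      have "is_meet L2 (f ` A) (f a)" using meet_transfer[OF img ord A(1) a] A(2) by simp
      moreover have "f ` A \<subseteq> L2" using A img by blast
      ultimately have "f a \<in> f ` A" using m by (auto simp: meet_irreducible_def)
      then obtain x where x: "x \<in> A" "f a = f x" by auto
      hence "a = x" using inj_onD[OF inj] A(1) a by blast
      thus "a \<in> A" using x by simp
    qed
  next
    assume m: "meet_irreducible L1 a"
    show "meet_irreducible L2 (f a)" unfolding meet_irreducible_def
    proof (intro conjI allI impI)
      show "f a \<in> L2" using a img by blast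
    next
      fix B assume B: "B \<subseteq> L2" "is_meet L2 B (f a)"
      let ?A = "{x\<in>L1. f x \<in> B}"
      have fA: "f ` ?A = B" using B(1) img by blast
      have "is_meet L1 ?A a" using meet_transfer[OF img ord _ a, of ?A] B(2) fA by auto
      moreover have "?A \<subseteq> L1" by blast
      ultimately have "a \<in> ?A" using m unfolding meet_irreducible_def by blast
      thus "f a \<in> B" by simp
    qed
  qed
qed

lemma fwd:
  assumes u1: "undirected V1 E1" and u2: "undirected V2 E2"
    and i1: "irreducible_graph V1 E1" and i2: "irreducible_graph V2 E2"
    and f: "sd_lattice_iso V1 E1 V2 E2 f"
  shows "\<exists>g. graph_iso (radical_vertices V1 E1) E1 (radical_vertices V2 E2) E2 g"
proof -
  let ?L1 = "assoc_lattice V1 E1"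
  let ?L2 = "assoc_lattice V2 E2"
  let ?R1 = "radical_vertices V1 E1"
  let ?R2 = "radical_vertices V2 E2"
  have bij: "bij_betw f ?L1 ?L2" and ord: "\<forall>X\<in>?L1. \<forall>Y\<in>?L1. X \<subseteq> Y \<longleftrightarrow> f X \<subseteq> f Y"
    and com: "\<forall>X\<in>?L1. f (nabla V1 E1 X) = nabla V2 E2 (f X)"
    using f by (auto simp: sd_lattice_iso_def)
  have img: "f ` ?L1 = ?L2" and inj: "inj_on f ?L1" using bij by (auto simp: bij_betw_def)
  have ex: "\<exists>y. y \<in> ?R2 \<and> f (nbhd V1 E1 x) = nbhd V2 E2 y" if x: "x \<in> ?R1" for x
  proof -
    have xV: "x \<in> V1" and mi: "meet_irreducible ?L1 (nbhd V1 E1 x)"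
      using x by (auto simp: radical_vertices_def essential_def)
    have mi2: "meet_irreducible ?L2 (f (nbhd V1 E1 x))"
      using mi_transfer[OF bij ord nbhd_in[OF u1 xV]] mi by simp
    then obtain y where y: "y \<in> nabla V2 E2 (f (nbhd V1 E1 x))" "f (nbhd V1 E1 x) = nbhd V2 E2 y"
      using mi_nbhd[OF u2] by blast
    have "y \<in> V2" using y(1) unfolding nabla_def by blast
    hence "y \<in> ?R2" using mi2 y(2) by (simp add: radical_vertices_def essential_def)
    thus ?thesis using y(2) by blast
  qed
  define g where "g x = (SOME y. y \<in> ?R2 \<and> f (nbhd V1 E1 x) = nbhd V2 E2 y)" for x
  have g: "g x \<in> ?R2 \<and> f (nbhd V1 E1 x) = nbhd V2 E2 (g x)" if "x \<in> ?R1" for x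
    unfolding g_def using someI_ex[OF ex[OF that]] .
  have R1V: "?R1 \<subseteq> V1" and R2V: "?R2 \<subseteq> V2" by (rule rad_sub)+
  have "inj_on g ?R1"
  proof (rule inj_onI)
    fix x x' assume x: "x \<in> ?R1" and x': "x' \<in> ?R1" and e: "g x = g x'"
    have "f (nbhd V1 E1 x) = f (nbhd V1 E1 x')" using g[OF x] g[OF x'] e by simp
    moreover have "nbhd V1 E1 x \<in> ?L1" "nbhd V1 E1 x' \<in> ?L1"
      using nbhd_in[OF u1] x x' R1V by auto
    ultimately have "nbhd V1 E1 x = nbhd V1 E1 x'" using inj_onD[OF inj] by blast
    thus "x = x'" using i1 x x' R1V by (auto simp: irreducible_graph_def)
  qed
  moreover have "g ` ?R1 = ?R2"
  proof
    show "g ` ?R1 \<subseteq> ?R2" using g by blast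
  next
    show "?R2 \<subseteq> g ` ?R1"
    proof
      fix y assume y: "y \<in> ?R2"
      have yV: "y \<in> V2" and miy: "meet_irreducible ?L2 (nbhd V2 E2 y)"
        using y by (auto simp: radical_vertices_def essential_def)
      have "nbhd V2 E2 y \<in> f ` ?L1" using nbhd_in[OF u2 yV] img by simp
      then obtain X where X: "X \<in> ?L1" "f X = nbhd V2 E2 y" by (metis imageE)
      have miX: "meet_irreducible ?L1 X" using mi_transfer[OF bij ord X(1)] miy X(2) by simp
      then obtain x where x: "x \<in> nabla V1 E1 X" "X = nbhd V1 E1 x" using mi_nbhd[OF u1] by blast
      have xV: "x \<in> V1" using x(1) unfolding nabla_def by blast
      have xR: "x \<in> ?R1" using xV miX x(2) by (simp add: radical_vertices_def essential_def)
      have "nbhd V2 E2 (g x) = nbhd V2 E2 y" using g[OF xR] X x(2) by simp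
      moreover have "g x \<in> V2" using g[OF xR] R2V by blast
      ultimately have "g x = y" using i2 yV unfolding irreducible_graph_def by blast
      thus "y \<in> g ` ?R1" using xR by blast
    qed
  qed
  moreover have "\<forall>x\<in>?R1. \<forall>x'\<in>?R1. E1 x x' \<longleftrightarrow> E2 (g x) (g x')"
  proof (intro ballI)
    fix x x' assume x: "x \<in> ?R1" and x': "x' \<in> ?R1"
    have xV: "x \<in> V1" "x' \<in> V1" using x x' R1V by auto
    have gV: "g x \<in> V2" "g x' \<in> V2" using g[OF x] g[OF x'] R2V by auto
    have m1: "nabla V1 E1 (nbhd V1 E1 x') \<in> ?L1" by (rule nabla_in[OF u1]) (auto simp: nbhd_def)
    have m2: "nbhd V1 E1 x \<in> ?L1" using nbhd_in[OF u1 xV(1)] .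
    have "E1 x x' \<longleftrightarrow> nabla V1 E1 (nbhd V1 E1 x') \<subseteq> nbhd V1 E1 x" using edge_char[OF u1 xV] .
    also have "\<dots> \<longleftrightarrow> f (nabla V1 E1 (nbhd V1 E1 x')) \<subseteq> f (nbhd V1 E1 x)" using ord m1 m2 by blast
    also have "f (nabla V1 E1 (nbhd V1 E1 x')) = nabla V2 E2 (nbhd V2 E2 (g x'))"
      using com nbhd_in[OF u1 xV(2)] g[OF x'] by simp
    also have "f (nbhd V1 E1 x) = nbhd V2 E2 (g x)" using g[OF x] by simp
    also have "nabla V2 E2 (nbhd V2 E2 (g x')) \<subseteq> nbhd V2 E2 (g x) \<longleftrightarrow> E2 (g x) (g x')"
      using edge_char[OF u2 gV] by simp
    finally show "E1 x x' \<longleftrightarrow> E2 (g x) (g x')" .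
  qed
  ultimately show ?thesis unfolding graph_iso_def bij_betw_def by blast
qed


lemma KA:
  assumes fin: "finite V" and u: "undirected V E" and T: "T \<subseteq> radical_vertices V E"
  shows "nabla V E (nabla V E T) = nabla V E (radical_vertices V E \<inter> nabla V E T)"
proof -
  have TV: "T \<subseteq> V" using T rad_sub[of V E] by blast
  have Z: "nabla V E (nabla V E T) \<in> assoc_lattice V E" by (rule nabla_in[OF u nabla_sub])
  have "nabla V E (radical_vertices V E \<inter> nabla V E (nabla V E (nabla V E T))) = nabla V E (nabla V E T)"
    by (rule K[OF fin u Z])
  thus ?thesis using nabla3[OF u TV] by simp
qed

lemma KB:
  assumes fin: "finite V" and u: "undirected V E" and X: "X \<in> assoc_lattice V E"
  shows "nabla V E X = nabla V E (radical_vertices V E \<inter> X)"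
proof -
  have XV: "X \<subseteq> V" using X latD by blast
  have Z: "nabla V E X \<in> assoc_lattice V E" by (rule nabla_in[OF u XV])
  have "nabla V E (radical_vertices V E \<inter> nabla V E (nabla V E X)) = nabla V E X"
    by (rule K[OF fin u Z])
  thus ?thesis using latD(2)[OF X] by simp
qed

lemma KOrd:
  assumes fin: "finite V" and u: "undirected V E"
    and X: "X \<in> assoc_lattice V E" and Y: "Y \<in> assoc_lattice V E"
  shows "X \<subseteq> Y \<longleftrightarrow> radical_vertices V E \<inter> nabla V E Y \<subseteq> radical_vertices V E \<inter> nabla V E X"
proof
  assume "X \<subseteq> Y" thus "radical_vertices V E \<inter> nabla V E Y \<subseteq> radical_vertices V E \<inter> nabla V E X"
    using nabla_anti by blast
next
  assume "radical_vertices V E \<inter> nabla V E Y \<subseteq> radical_vertices V E \<inter> nabla V E X"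
  hence "nabla V E (radical_vertices V E \<inter> nabla V E X) \<subseteq> nabla V E (radical_vertices V E \<inter> nabla V E Y)"
    by (rule nabla_anti)
  thus "X \<subseteq> Y" using K[OF fin u X] K[OF fin u Y] by simp
qed

lemma transfer:
  assumes g: "graph_iso (radical_vertices V1 E1) E1 (radical_vertices V2 E2) E2 g"
    and T: "T \<subseteq> radical_vertices V1 E1"
  shows "radical_vertices V2 E2 \<inter> nabla V2 E2 (g ` T) = g ` (radical_vertices V1 E1 \<inter> nabla V1 E1 T)"
proof -
  let ?R1 = "radical_vertices V1 E1"
  let ?R2 = "radical_vertices V2 E2"
  have img: "g ` ?R1 = ?R2" and e: "\<forall>x\<in>?R1. \<forall>y\<in>?R1. E1 x y \<longleftrightarrow> E2 (g x) (g y)"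
    using g by (auto simp: graph_iso_def bij_betw_def)
  have R1V: "?R1 \<subseteq> V1" and R2V: "?R2 \<subseteq> V2" by (rule rad_sub)+
  show ?thesis
  proof
    show "?R2 \<inter> nabla V2 E2 (g ` T) \<subseteq> g ` (?R1 \<inter> nabla V1 E1 T)"
    proof
      fix y assume y: "y \<in> ?R2 \<inter> nabla V2 E2 (g ` T)"
      then obtain x where x: "x \<in> ?R1" "y = g x" using img by blast
      have "\<forall>t\<in>T. E2 (g t) (g x)" using y x by (auto simp: nabla_def)
      hence "\<forall>t\<in>T. E1 t x" using e T x by blast
      hence "x \<in> nabla V1 E1 T" using x R1V by (auto simp: nabla_def)
      thus "y \<in> g ` (?R1 \<inter> nabla V1 E1 T)" using x by blast
    qed
  next
    show "g ` (?R1 \<inter> nabla V1 E1 T) \<subseteq> ?R2 \<inter> nabla V2 E2 (g ` T)"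
    proof
      fix y assume "y \<in> g ` (?R1 \<inter> nabla V1 E1 T)"
      then obtain x where x: "x \<in> ?R1" "x \<in> nabla V1 E1 T" "y = g x" by blast
      have yR: "y \<in> ?R2" using x img by blast
      have "\<forall>t\<in>T. E1 t x" using x by (auto simp: nabla_def)
      hence "\<forall>t\<in>T. E2 (g t) (g x)" using e T x by blast
      thus "y \<in> ?R2 \<inter> nabla V2 E2 (g ` T)" using yR R2V x by (auto simp: nabla_def)
    qed
  qed
qed


lemma bwd:
  assumes fin1: "finite V1" and fin2: "finite V2"
    and u1: "undirected V1 E1" and u2: "undirected V2 E2"
    and g: "graph_iso (radical_vertices V1 E1) E1 (radical_vertices V2 E2) E2 g"
  shows "\<exists>f. sd_lattice_iso V1 E1 V2 E2 f"
proof -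
  let ?L1 = "assoc_lattice V1 E1"
  let ?L2 = "assoc_lattice V2 E2"
  let ?R1 = "radical_vertices V1 E1"
  let ?R2 = "radical_vertices V2 E2"
  let ?N1 = "nabla V1 E1"
  let ?N2 = "nabla V2 E2"
  have img: "g ` ?R1 = ?R2" and ginj: "inj_on g ?R1"
    using g by (auto simp: graph_iso_def bij_betw_def)
  have R1V: "?R1 \<subseteq> V1" and R2V: "?R2 \<subseteq> V2" by (rule rad_sub)+
  define f where "f X = ?N2 (g ` (?R1 \<inter> ?N1 X))" for X
  have gsub: "g ` S \<subseteq> V2" if "S \<subseteq> ?R1" for S using that img R2V by blast
  have F1: "f X \<in> ?L2" for X unfolding f_def by (rule nabla_in[OF u2 gsub]) blast
  have F2: "?R2 \<inter> f X = g ` (?R1 \<inter> X)" if X: "X \<in> ?L1" for X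
  proof -
    have "?R2 \<inter> f X = g ` (?R1 \<inter> ?N1 (?R1 \<inter> ?N1 X))"
      unfolding f_def by (rule transfer[OF g]) blast
    also have "?N1 (?R1 \<inter> ?N1 X) = X" by (rule K[OF fin1 u1 X])
    finally show ?thesis .
  qed
  have F3: "?R2 \<inter> ?N2 (f X) = g ` (?R1 \<inter> ?N1 X)" if X: "X \<in> ?L1" for X
  proof -
    have "?N2 (f X) = ?N2 (?R2 \<inter> f X)" by (rule KB[OF fin2 u2 F1])
    also have "\<dots> = ?N2 (g ` (?R1 \<inter> X))" using F2[OF X] by simp
    finally have "?R2 \<inter> ?N2 (f X) = ?R2 \<inter> ?N2 (g ` (?R1 \<inter> X))" by simp
    also have "\<dots> = g ` (?R1 \<inter> ?N1 (?R1 \<inter> X))" by (rule transfer[OF g]) blast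
    also have "?N1 (?R1 \<inter> X) = ?N1 X" using KB[OF fin1 u1 X] by simp
    finally show ?thesis .
  qed
  have com: "f (?N1 X) = ?N2 (f X)" if X: "X \<in> ?L1" for X
  proof -
    have "f (?N1 X) = ?N2 (g ` (?R1 \<inter> X))" unfolding f_def using latD(2)[OF X] by simp
    also have "\<dots> = ?N2 (?R2 \<inter> f X)" using F2[OF X] by simp
    also have "\<dots> = ?N2 (f X)" using KB[OF fin2 u2 F1] by simp
    finally show ?thesis .
  qed
  have ord: "X \<subseteq> Y \<longleftrightarrow> f X \<subseteq> f Y" if X: "X \<in> ?L1" and Y: "Y \<in> ?L1" for X Y
  proof -
    have "f X \<subseteq> f Y \<longleftrightarrow> ?R2 \<inter> ?N2 (f Y) \<subseteq> ?R2 \<inter> ?N2 (f X)" by (rule KOrd[OF fin2 u2 F1 F1])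
    also have "\<dots> \<longleftrightarrow> g ` (?R1 \<inter> ?N1 Y) \<subseteq> g ` (?R1 \<inter> ?N1 X)" using F3[OF X] F3[OF Y] by simp
    also have "\<dots> \<longleftrightarrow> ?R1 \<inter> ?N1 Y \<subseteq> ?R1 \<inter> ?N1 X"
    proof
      assume h: "g ` (?R1 \<inter> ?N1 Y) \<subseteq> g ` (?R1 \<inter> ?N1 X)"
      show "?R1 \<inter> ?N1 Y \<subseteq> ?R1 \<inter> ?N1 X"
      proof
        fix z assume z: "z \<in> ?R1 \<inter> ?N1 Y"
        then obtain w where w: "w \<in> ?R1 \<inter> ?N1 X" "g z = g w" using h by blast
        have "z = w" using inj_onD[OF ginj w(2)] z w(1) by blast
        thus "z \<in> ?R1 \<inter> ?N1 X" using w by simp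
      qed
    qed blast
    also have "\<dots> \<longleftrightarrow> X \<subseteq> Y" using KOrd[OF fin1 u1 X Y] by simp
    finally show ?thesis by simp
  qed
  have inj: "inj_on f ?L1"
  proof (rule inj_onI)
    fix X Y assume X: "X \<in> ?L1" and Y: "Y \<in> ?L1" and e: "f X = f Y"
    show "X = Y" using ord[OF X Y] ord[OF Y X] e by blast
  qed
  have surj: "?L2 \<subseteq> f ` ?L1"
  proof
    fix Y assume Y: "Y \<in> ?L2"
    define U where "U = {x \<in> ?R1. g x \<in> ?N2 Y}"
    have UR: "U \<subseteq> ?R1" unfolding U_def by blast
    have gU: "g ` U = ?R2 \<inter> ?N2 Y"
    proof
      show "g ` U \<subseteq> ?R2 \<inter> ?N2 Y" unfolding U_def using img by auto
    next
      show "?R2 \<inter> ?N2 Y \<subseteq> g ` U"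
      proof
        fix y assume y: "y \<in> ?R2 \<inter> ?N2 Y"
        hence "y \<in> g ` ?R1" using img by simp
        then obtain x where x: "x \<in> ?R1" "y = g x" by auto
        hence "x \<in> U" using y unfolding U_def by simp
        thus "y \<in> g ` U" using x(2) by simp
      qed
    qed
    have U1: "U \<subseteq> V1" using UR R1V by blast
    have XL: "?N1 U \<in> ?L1" by (rule nabla_in[OF u1 U1])
    have RU: "?R1 \<inter> ?N1 U \<subseteq> ?R1" by blast
    have "f (?N1 U) = ?N2 (g ` (?R1 \<inter> ?N1 (?N1 U)))" unfolding f_def ..
    also have "\<dots> = ?N2 (g ` (?R1 \<inter> ?N1 (?R1 \<inter> ?N1 U)))" using KA[OF fin1 u1 UR] by simp
    also have "\<dots> = ?N2 (?R2 \<inter> ?N2 (g ` (?R1 \<inter> ?N1 U)))" using transfer[OF g RU] by simp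
    also have "\<dots> = ?N2 (?R2 \<inter> ?N2 (?R2 \<inter> ?N2 (g ` U)))" using transfer[OF g UR] by simp
    also have "\<dots> = ?N2 (?R2 \<inter> ?N2 (?R2 \<inter> ?N2 (?R2 \<inter> ?N2 Y)))" using gU by simp
    also have "\<dots> = ?N2 (?R2 \<inter> ?N2 (?R2 \<inter> Y))" using K[OF fin2 u2 Y] by simp
    also have "\<dots> = ?N2 (?R2 \<inter> ?N2 Y)" using KB[OF fin2 u2 Y] by simp
    also have "\<dots> = Y" by (rule K[OF fin2 u2 Y])
    finally have "f (?N1 U) = Y" .
    thus "Y \<in> f ` ?L1" using XL by (metis imageI)
  qed
  have "f ` ?L1 = ?L2" using surj F1 by blast
  moreover have "\<forall>X\<in>?L1. \<forall>Y\<in>?L1. X \<subseteq> Y \<longleftrightarrow> f X \<subseteq> f Y" using ord by simp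
  moreover have "\<forall>X\<in>?L1. f (?N1 X) = ?N2 (f X)" using com by simp
  ultimately have "sd_lattice_iso V1 E1 V2 E2 f"
    unfolding sd_lattice_iso_def bij_betw_def using inj by simp
  thus ?thesis by blast
qed

theorem mainTheorem17:
  fixes V1 :: "'a set" and E1 :: "'a \<Rightarrow> 'a \<Rightarrow> bool"
    and V2 :: "'b set" and E2 :: "'b \<Rightarrow> 'b \<Rightarrow> bool"
  assumes "finite V1" and "finite V2"
    and "undirected V1 E1" and "undirected V2 E2"
    and "irreducible_graph V1 E1" and "irreducible_graph V2 E2"
  shows "(\<exists>f. sd_lattice_iso V1 E1 V2 E2 f) \<longleftrightarrow>
         (\<exists>g. graph_iso (radical_vertices V1 E1) E1 (radical_vertices V2 E2) E2 g)"
  using fwd[OF assms(3-6)] bwd[OF assms(1-4)] by blast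

end
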